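(* Let $A\in\mathbf{R}^{n\times n}$, $C_i\in\mathbf{R}^{m_i\times n}$ ($i=1,\ldots,N$), $H\in\mathbf{R}^{p\times n}$, and let $\mathcal{L}$ be the Laplacian of a directed graph $\mathbf{G}$ on $N$ nodes. Set $\bar A=I_N\otimes A$, $\bar C=\mathrm{diag}[C_1,\ldots,C_N]$, $\bar H=\mathcal{L}\otimes H$. Suppose the pair $\left(\begin{bmatrix}\bar C\\ \bar H\end{bmatrix},\bar A\right)$ is detectable. Then for every reach $\mathbf{R}_s$ of $\mathbf{G}$: (i) $\bigcap_{i\in\mathbf{R}_s}\mathcal{C}_i=\{0\}$; (ii) $\mathcal{O}_H\cap\mathcal{C}_i=\{0\}$ for all $i\in\mathbf{R}_s$. Here $\mathcal{C}_i$ is the undetectable subspace of $(C_i,A)$ and $\mathcal{O}_H=\bigcap_{l=1}^n\operatorname{Ker}(HA^{l-1})$.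
   Context: Directed graph $\mathbf{G}$ on $\{1,\ldots,N\}$ without self-loops; adjacency matrix $\mathbf{A}=[\mathbf{a}_{ij}]$ with $\mathbf{a}_{ij}=1$ if there is an edge from $j$ to $i$, else $0$; $p_i$ the in-degree of node $i$; Laplacian $\mathcal{L}=\mathrm{diag}[p_1,\ldots,p_N]-\mathbf{A}$. For a vertex $j$, the reachable subgraph $\mathbf{R}(j)$ is the set consisting of $j$ and all nodes reachable from $j$ by a directed path. A reach is a maximal reachable subgraph: $\mathbf{R}=\mathbf{R}(i)$ for some $i$ such that there is no $j\ne i$ with $\mathbf{R}(i)\subsetneq\mathbf{R}(j)$. For a square matrix $F$ with minimal polynomial $\alpha_F=\alpha_F^-\alpha_F^+$ (zeros of $\alpha_F^-$ in the open left half-plane, of $\alpha_F^+$ in the closed right half-plane), the undetectable subspace of $(G,F)$ is $\bigcap_{l=1}^n\operatorname{Ker}(GF^{l-1})\cap\operatorname{Ker}\alpha_F^+(F)$; the pair is detectable iff this subspace is $\{0\}$. *)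

theory Defs
  imports "Jordan_Normal_Form.Matrix" "HOL-Computational_Algebra.Polynomial" Complex_Main
begin

text \<open>Evaluation of a polynomial at a square matrix (Horner scheme):
  for coefficients a0, a1, ..., ak this is a0 I + F (a1 I + F (... )) = sum_i a_i F^i.\<close>
definition mat_poly_eval :: "'a :: comm_ring_1 poly \<Rightarrow> 'a mat \<Rightarrow> 'a mat" where
  "mat_poly_eval q F =
     foldr (\<lambda>c M. c \<cdot>\<^sub>m 1\<^sub>m (dim_row F) + F * M) (coeffs q) (0\<^sub>m (dim_row F) (dim_row F))"

definition min_poly :: "real mat \<Rightarrow> real poly" where
  "min_poly F = (THE q. lead_coeff q = 1 \<and> mat_poly_eval q F = 0\<^sub>m (dim_row F) (dim_row F) \<and>
      (\<forall>r. r \<noteq> 0 \<and> mat_poly_eval r F = 0\<^sub>m (dim_row F) (dim_row F) \<longrightarrow> degree q \<le> degree r))"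

definition alpha_plus :: "real mat \<Rightarrow> complex poly" where
  "alpha_plus F = (let q = map_poly complex_of_real (min_poly F) in
     \<Prod>z\<in>{z. poly q z = 0 \<and> Re z \<ge> 0}. [:- z, 1:] ^ order z q)"

definition undetectable_subspace :: "real mat \<Rightarrow> real mat \<Rightarrow> real vec set" where
  "undetectable_subspace G F =
     {x \<in> carrier_vec (dim_row F).
        (\<forall>l\<in>{1..dim_row F}. (G * F ^\<^sub>m (l - 1)) *\<^sub>v x = 0\<^sub>v (dim_row G)) \<and>
        mat_poly_eval (alpha_plus F) (map_mat complex_of_real F) *\<^sub>v map_vec complex_of_real x
          = 0\<^sub>v (dim_row F)}"

definition detectable :: "real mat \<Rightarrow> real mat \<Rightarrow> bool" where
  "detectable G F \<longleftrightarrow> undetectable_subspace G F = {0\<^sub>v (dim_row F)}"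

definition unobs_subspace :: "real mat \<Rightarrow> real mat \<Rightarrow> real vec set" where
  "unobs_subspace H A =
     {x \<in> carrier_vec (dim_row A). \<forall>l\<in>{1..dim_row A}. (H * A ^\<^sub>m (l - 1)) *\<^sub>v x = 0\<^sub>v (dim_row H)}"

definition kron_mat :: "'a :: times mat \<Rightarrow> 'a mat \<Rightarrow> 'a mat" where
  "kron_mat X Y = mat (dim_row X * dim_row Y) (dim_col X * dim_col Y)
     (\<lambda>(i, j). X $$ (i div dim_row Y, j div dim_col Y) * Y $$ (i mod dim_row Y, j mod dim_col Y))"

text \<open>Directed graph on nodes {0..<N} given by an edge set E; (j, i) \<in> E means an edge
  from j to i (so a_ij = 1 iff (j,i) \<in> E).\<close>

definition in_degree :: "(nat \<times> nat) set \<Rightarrow> nat \<Rightarrow> nat" where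
  "in_degree E i = card {j. (j, i) \<in> E}"

definition laplacian :: "nat \<Rightarrow> (nat \<times> nat) set \<Rightarrow> real mat" where
  "laplacian N E = mat N N (\<lambda>(i, j).
      (if i = j then real (in_degree E i) else 0) - (if (j, i) \<in> E then 1 else 0))"

definition reachable_set :: "(nat \<times> nat) set \<Rightarrow> nat \<Rightarrow> nat set" where
  "reachable_set E j = {k. (j, k) \<in> E\<^sup>*}"

definition is_reach :: "nat \<Rightarrow> (nat \<times> nat) set \<Rightarrow> nat set \<Rightarrow> bool" where
  "is_reach N E R \<longleftrightarrow> (\<exists>i<N. R = reachable_set E i \<and>
      \<not> (\<exists>j<N. j \<noteq> i \<and> reachable_set E i \<subset> reachable_set E j))"

end

theory Submission imports Defs "Jordan_Normal_Form.Determinant" begin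

lemma sum_div_mod:
  fixes N n :: nat
  shows "(\<Sum>j\<in>{0..<N*n}. f (j div n) (j mod n)) = (\<Sum>k\<in>{0..<N}. \<Sum>c\<in>{0..<n}. (f k c :: 'a::comm_monoid_add))"
proof -
  have "(\<Sum>k\<in>{0..<N}. \<Sum>c\<in>{0..<n}. f k c) = (\<Sum>(k,c)\<in>{0..<N}\<times>{0..<n}. f k c)"
    by (rule sum.cartesian_product)
  also have "\<dots> = (\<Sum>j\<in>{0..<N*n}. f (j div n) (j mod n))"
  proof (rule sum.reindex_bij_witness[where i="\<lambda>j. (j div n, j mod n)" and j="\<lambda>(k,c). k*n+c"])
    fix a assume a: "a \<in> {0..<N} \<times> {0..<n}"
    then show "(\<lambda>j. (j div n, j mod n)) ((\<lambda>(k,c). k*n+c) a) = a" by auto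
    obtain k c where kc: "a = (k,c)" "k < N" "c < n" using a by auto
    have "k*n+c < (k+1)*n" using kc by simp
    also have "(k+1)*n \<le> N*n" using kc by (intro mult_le_mono1) simp
    finally show "(\<lambda>(k,c). k*n+c) a \<in> {0..<N*n}" using kc by simp
    show "f ((case a of (k, c) \<Rightarrow> k * n + c) div n) ((case a of (k, c) \<Rightarrow> k * n + c) mod n) = (case a of (k, c) \<Rightarrow> f k c)"
      using kc by simp
  next
    fix j assume j: "j \<in> {0..<N*n}"
    then show "(\<lambda>(k,c). k*n+c) (j div n, j mod n) = j" by simp
    from j have "n > 0" by (cases "n = 0") auto
    with j show "(j div n, j mod n) \<in> {0..<N}\<times>{0..<n}"
      by (auto simp: less_mult_imp_div_less) 
  qed
  finally show ?thesis by simp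
qed

definition kv :: "'a::times vec \<Rightarrow> 'a vec \<Rightarrow> 'a vec" where
  "kv v x = vec (dim_vec v * dim_vec x) (\<lambda>i. v $ (i div dim_vec x) * x $ (i mod dim_vec x))"

lemma kv_carrier[simp]: "v \<in> carrier_vec N \<Longrightarrow> x \<in> carrier_vec n \<Longrightarrow> kv v x \<in> carrier_vec (N*n)"
  unfolding kv_def by auto

lemma dim_kv[simp]: "dim_vec (kv v x) = dim_vec v * dim_vec x"
  unfolding kv_def by auto

lemma index_kv: "v \<in> carrier_vec N \<Longrightarrow> x \<in> carrier_vec n \<Longrightarrow> i < N*n \<Longrightarrow>
   kv v x $ i = v $ (i div n) * x $ (i mod n)"
  unfolding kv_def by auto

lemma kron_carrier[simp]: "P \<in> carrier_mat a N \<Longrightarrow> Q \<in> carrier_mat b n \<Longrightarrow> kron_mat P Q \<in> carrier_mat (a*b) (N*n)"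
  unfolding kron_mat_def by auto

lemma dim_kron[simp]: "dim_row (kron_mat P Q) = dim_row P * dim_row Q" "dim_col (kron_mat P Q) = dim_col P * dim_col Q"
  unfolding kron_mat_def by auto

lemma index_kron: "P \<in> carrier_mat a N \<Longrightarrow> Q \<in> carrier_mat b n \<Longrightarrow> i < a*b \<Longrightarrow> j < N*n \<Longrightarrow>
  kron_mat P Q $$ (i,j) = P $$ (i div b, j div n) * Q $$ (i mod b, j mod n)"
  unfolding kron_mat_def by auto

lemma div_lt: "i < a*(b::nat) \<Longrightarrow> i div b < a"
  by (simp add: less_mult_imp_div_less)
lemma mod_lt: "i < a*(b::nat) \<Longrightarrow> i mod b < b"
  by (cases "b = 0") auto

lemma kron_mult_vec:
  fixes P Q :: "'a::comm_semiring_1 mat"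
  assumes P: "P \<in> carrier_mat a N" and Q: "Q \<in> carrier_mat b n"
    and v: "v \<in> carrier_vec N" and x: "x \<in> carrier_vec n"
  shows "kron_mat P Q *\<^sub>v kv v x = kv (P *\<^sub>v v) (Q *\<^sub>v x)"
proof (rule eq_vecI)
  show "dim_vec (kron_mat P Q *\<^sub>v kv v x) = dim_vec (kv (P *\<^sub>v v) (Q *\<^sub>v x))"
    using P Q by simp
  fix i assume "i < dim_vec (kv (P *\<^sub>v v) (Q *\<^sub>v x))"
  hence i: "i < a*b" using P Q by simp
  have "(kron_mat P Q *\<^sub>v kv v x) $ i = (\<Sum>j\<in>{0..<N*n}. kron_mat P Q $$ (i,j) * kv v x $ j)"
    using i P Q v x by (simp add: scalar_prod_def)
  also have "\<dots> = (\<Sum>j\<in>{0..<N*n}. (\<lambda>k c. P $$ (i div b, k) * Q $$ (i mod b, c) * (v $ k * x $ c)) (j div n) (j mod n))"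
    by (rule sum.cong, insert P Q v x i, auto simp: index_kron index_kv)
  also have "\<dots> = (\<Sum>k\<in>{0..<N}. \<Sum>c\<in>{0..<n}. P $$ (i div b, k) * Q $$ (i mod b, c) * (v $ k * x $ c))"
    by (rule sum_div_mod)
  also have "\<dots> = (\<Sum>k\<in>{0..<N}. P $$ (i div b, k) * v $ k) * (\<Sum>c\<in>{0..<n}. Q $$ (i mod b, c) * x $ c)"
    by (simp add: sum_product ac_simps)
  also have "\<dots> = kv (P *\<^sub>v v) (Q *\<^sub>v x) $ i"
    using P Q v x i div_lt[OF i] mod_lt[OF i]
    by (subst index_kv[of _ a _ b], auto simp: scalar_prod_def)
  finally show "(kron_mat P Q *\<^sub>v kv v x) $ i = kv (P *\<^sub>v v) (Q *\<^sub>v x) $ i" .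
qed

lemma kron_mult:
  fixes P Q R S :: "'a::comm_semiring_1 mat"
  assumes P: "P \<in> carrier_mat a N" and Q: "Q \<in> carrier_mat b n"
    and R: "R \<in> carrier_mat N c" and S: "S \<in> carrier_mat n d"
  shows "kron_mat P Q * kron_mat R S = kron_mat (P * R) (Q * S)"
proof (rule eq_matI)
  show "dim_row (kron_mat P Q * kron_mat R S) = dim_row (kron_mat (P * R) (Q * S))"
    using P Q R S by simp
  show "dim_col (kron_mat P Q * kron_mat R S) = dim_col (kron_mat (P * R) (Q * S))"
    using P Q R S by simp
  fix i j assume "i < dim_row (kron_mat (P * R) (Q * S))" "j < dim_col (kron_mat (P * R) (Q * S))"
  hence i: "i < a*b" and j: "j < c*d" using P Q R S by auto
  have "(kron_mat P Q * kron_mat R S) $$ (i,j) = (\<Sum>t\<in>{0..<N*n}. kron_mat P Q $$ (i,t) * kron_mat R S $$ (t,j))"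
    using i j P Q R S by (simp add: scalar_prod_def)
  also have "\<dots> = (\<Sum>t\<in>{0..<N*n}. (\<lambda>k e. P $$ (i div b, k) * Q $$ (i mod b, e) * (R $$ (k, j div d) * S $$ (e, j mod d))) (t div n) (t mod n))"
    by (rule sum.cong, insert P Q R S i j, auto simp: index_kron)
  also have "\<dots> = (\<Sum>k\<in>{0..<N}. \<Sum>e\<in>{0..<n}. P $$ (i div b, k) * Q $$ (i mod b, e) * (R $$ (k, j div d) * S $$ (e, j mod d)))"
    by (rule sum_div_mod)
  also have "\<dots> = (\<Sum>k\<in>{0..<N}. P $$ (i div b, k) * R $$ (k, j div d)) * (\<Sum>e\<in>{0..<n}. Q $$ (i mod b, e) * S $$ (e, j mod d))"
    by (simp add: sum_product ac_simps)
  also have "\<dots> = kron_mat (P * R) (Q * S) $$ (i,j)"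
    using P Q R S i j div_lt[OF i] mod_lt[OF i] div_lt[OF j] mod_lt[OF j]
    by (subst index_kron[of "P*R" a c "Q*S" b d i j], auto simp: scalar_prod_def)
  finally show "(kron_mat P Q * kron_mat R S) $$ (i,j) = kron_mat (P * R) (Q * S) $$ (i,j)" .
qed


lemma foldr_carrier:
  assumes B: "B \<in> carrier_mat n n"
  shows "foldr (\<lambda>c M. c \<cdot>\<^sub>m 1\<^sub>m n + B * M) cs (0\<^sub>m n n) \<in> carrier_mat n n"
  by (induct cs, insert B, auto)

lemma mpe_carrier: "B \<in> carrier_mat n n \<Longrightarrow> mat_poly_eval q B \<in> carrier_mat n n"
  unfolding mat_poly_eval_def using foldr_carrier[of B n] by auto

lemma divmod_eq: "(i::nat) div n = j div n \<Longrightarrow> i mod n = j mod n \<Longrightarrow> i = j"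
  by (metis div_mult_mod_eq)

lemma kron1_add: fixes X Y :: "'a::comm_semiring_1 mat"
  assumes "X \<in> carrier_mat n n" "Y \<in> carrier_mat n n"
  shows "kron_mat (1\<^sub>m N) (X + Y) = kron_mat (1\<^sub>m N) X + kron_mat (1\<^sub>m N) Y"
  by (rule eq_matI, insert assms, auto simp: index_kron[of _ N N _ n n] div_lt mod_lt distrib_left)

lemma kron1_smult_one: 
  shows "kron_mat (1\<^sub>m N) ((c::'a::comm_semiring_1) \<cdot>\<^sub>m 1\<^sub>m n) = c \<cdot>\<^sub>m 1\<^sub>m (N*n)"
proof (rule eq_matI)
  fix i j assume ij: "i < dim_row (c \<cdot>\<^sub>m 1\<^sub>m (N * n))" "j < dim_col (c \<cdot>\<^sub>m 1\<^sub>m (N * n))"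
  hence i: "i < N*n" and j: "j < N*n" by auto
  show "kron_mat (1\<^sub>m N) (c \<cdot>\<^sub>m 1\<^sub>m n) $$ (i, j) = (c \<cdot>\<^sub>m 1\<^sub>m (N * n)) $$ (i, j)"
    using i j div_lt[OF i] mod_lt[OF i] div_lt[OF j] mod_lt[OF j] divmod_eq[of i n j]
    by (subst index_kron[of _ N N _ n n], auto)
qed auto

lemma kron1_zero: "kron_mat (1\<^sub>m N) (0\<^sub>m n n) = (0\<^sub>m (N*n) (N*n) :: 'a::comm_semiring_1 mat)"
  by (rule eq_matI, auto simp: index_kron[of _ N N _ n n] div_lt mod_lt)

lemma kron1_mult: fixes X Y :: "'a::comm_semiring_1 mat"
  assumes "X \<in> carrier_mat n n" "Y \<in> carrier_mat n n"
  shows "kron_mat (1\<^sub>m N) X * kron_mat (1\<^sub>m N) Y = kron_mat (1\<^sub>m N) (X * Y)"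
  using kron_mult[of "1\<^sub>m N" N N X n n "1\<^sub>m N" N Y n] assms by simp

lemma mpe_kron: fixes B :: "'a::comm_ring_1 mat"
  assumes B: "B \<in> carrier_mat n n"
  shows "mat_poly_eval q (kron_mat (1\<^sub>m N) B) = kron_mat (1\<^sub>m N) (mat_poly_eval q B)"
proof -
  have "foldr (\<lambda>c M. c \<cdot>\<^sub>m 1\<^sub>m (N*n) + kron_mat (1\<^sub>m N) B * M) cs (0\<^sub>m (N*n) (N*n))
     = kron_mat (1\<^sub>m N) (foldr (\<lambda>c M. c \<cdot>\<^sub>m 1\<^sub>m n + B * M) cs (0\<^sub>m n n))" for cs
  proof (induct cs)
    case Nil then show ?case by (simp add: kron1_zero)
  next
    case (Cons c cs)
    have F: "foldr (\<lambda>c M. c \<cdot>\<^sub>m 1\<^sub>m n + B * M) cs (0\<^sub>m n n) \<in> carrier_mat n n"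
      by (rule foldr_carrier[OF B])
    show ?case using Cons F B
      by (simp add: kron1_add[of _ n] kron1_smult_one kron1_mult[of _ n])
  qed
  thus ?thesis unfolding mat_poly_eval_def using B by simp
qed

lemma kron1_zero_iff: fixes X :: "'a::comm_semiring_1 mat"
  assumes X: "X \<in> carrier_mat n n" and N: "N > 0"
  shows "kron_mat (1\<^sub>m N) X = 0\<^sub>m (N*n) (N*n) \<longleftrightarrow> X = 0\<^sub>m n n"
proof
  assume K: "kron_mat (1\<^sub>m N) X = 0\<^sub>m (N*n) (N*n)"
  show "X = 0\<^sub>m n n"
  proof (rule eq_matI)
    fix i j assume "i < dim_row (0\<^sub>m n n :: 'a mat)" "j < dim_col (0\<^sub>m n n :: 'a mat)"
    hence i: "i < n" and j: "j < n" by auto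
    have i': "i < N*n" and j': "j < N*n" using i j N
      by (metis mult.commute mult_less_cancel2 mult_1_right less_le_trans nat_mult_le_cancel_disj Suc_leI nat_mult_less_cancel_disj One_nat_def)+
    have "kron_mat (1\<^sub>m N) X $$ (i,j) = 0" using K i' j' by simp
    thus "X $$ (i, j) = 0\<^sub>m n n $$ (i, j)"
      using i j i' j' N X by (subst (asm) index_kron[of _ N N _ n n], auto)
  qed (insert X, auto)
qed (simp add: kron1_zero)

lemma min_poly_kron: assumes A: "A \<in> carrier_mat n n" and N: "N > 0"
  shows "min_poly (kron_mat (1\<^sub>m N) A) = min_poly A"
proof -
  have d: "dim_row (kron_mat (1\<^sub>m N) A) = N*n" "dim_row A = n" using A by auto
  have eq: "mat_poly_eval q (kron_mat (1\<^sub>m N) A) = 0\<^sub>m (N*n) (N*n) \<longleftrightarrow> mat_poly_eval q A = 0\<^sub>m n n" for q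
    unfolding mpe_kron[OF A] by (rule kron1_zero_iff[OF mpe_carrier[OF A] N])
  show ?thesis unfolding min_poly_def d eq ..
qed

lemma alpha_plus_kron: assumes A: "A \<in> carrier_mat n n" and N: "N > 0"
  shows "alpha_plus (kron_mat (1\<^sub>m N) A) = alpha_plus A"
  unfolding alpha_plus_def min_poly_kron[OF A N] ..

lemma map_kron: "map_mat complex_of_real (kron_mat P Q) = kron_mat (map_mat complex_of_real P) (map_mat complex_of_real Q)"
  by (rule eq_matI, auto simp: kron_mat_def mod_lt div_lt)

lemma map_one: "map_mat complex_of_real (1\<^sub>m N) = 1\<^sub>m N"
  by (rule eq_matI, auto)

lemma map_kv: "map_vec complex_of_real (kv v x) = kv (map_vec complex_of_real v) (map_vec complex_of_real x)"
  by (rule eq_vecI, auto simp: kv_def mod_lt div_lt)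


lemma kernel_transpose:
  fixes Z :: "real mat"
  assumes Z: "Z \<in> carrier_mat k k" and u: "u \<in> carrier_vec k" "u \<noteq> 0\<^sub>v k" "Z *\<^sub>v u = 0\<^sub>v k"
  shows "\<exists>w. w \<in> carrier_vec k \<and> w \<noteq> 0\<^sub>v k \<and> transpose_mat Z *\<^sub>v w = 0\<^sub>v k"
proof -
  have "det Z = 0" using det_0_iff_vec_prod_zero[OF Z] u by blast
  hence "det (transpose_mat Z) = 0" using det_transpose[OF Z] by simp
  thus ?thesis using det_0_iff_vec_prod_zero[of "transpose_mat Z" k] Z by auto
qed

lemma krylov_dep:
  fixes A :: "real mat"
  assumes A: "A \<in> carrier_mat n n" and x: "x \<in> carrier_vec n"
  shows "\<exists>a k. k \<le> n \<and> a k \<noteq> 0 \<and> (\<forall>r<n. (\<Sum>l\<in>{0..k}. a l * (A ^\<^sub>m l *\<^sub>v x) $ r) = 0)"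
proof -
  define Z where "Z = mat (Suc n) (Suc n) (\<lambda>(r,l). if r < n then (A ^\<^sub>m l *\<^sub>v x) $ r else (0::real))"
  have Z: "Z \<in> carrier_mat (Suc n) (Suc n)" unfolding Z_def by auto
  have "transpose_mat Z *\<^sub>v unit_vec (Suc n) n = 0\<^sub>v (Suc n)"
  proof (rule eq_vecI)
    fix l assume "l < dim_vec (0\<^sub>v (Suc n) :: real vec)"
    hence l: "l < Suc n" by simp
    have "(transpose_mat Z *\<^sub>v unit_vec (Suc n) n) $ l = (\<Sum>r\<in>{0..<Suc n}. Z $$ (r,l) * unit_vec (Suc n) n $ r)"
      using Z l by (simp add: scalar_prod_def)
    also have "\<dots> = 0" by (rule sum.neutral, insert l, auto simp: Z_def)
    finally show "(transpose_mat Z *\<^sub>v unit_vec (Suc n) n) $ l = 0\<^sub>v (Suc n) $ l" using l by simp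
  qed (insert Z, auto)
  then obtain u where u: "u \<in> carrier_vec (Suc n)" "u \<noteq> 0\<^sub>v (Suc n)" "transpose_mat (transpose_mat Z) *\<^sub>v u = 0\<^sub>v (Suc n)"
    using kernel_transpose[of "transpose_mat Z" "Suc n" "unit_vec (Suc n) n"] Z by auto
  hence Zu: "Z *\<^sub>v u = 0\<^sub>v (Suc n)" by simp
  define S where "S = {l. l < Suc n \<and> u $ l \<noteq> 0}"
  have "S \<noteq> {}"
  proof
    assume "S = {}"
    hence "u = 0\<^sub>v (Suc n)" using u(1) by (intro eq_vecI, auto simp: S_def)
    thus False using u by simp
  qed
  moreover have fS: "finite S" unfolding S_def by auto
  ultimately have kS: "Max S \<in> S" by simp
  define k where "k = Max S"
  have k: "k \<le> n" "u $ k \<noteq> 0" using kS unfolding k_def S_def by auto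
  have big: "u $ l = 0" if "l < Suc n" "\<not> l \<le> k" for l
  proof (rule ccontr)
    assume "u $ l \<noteq> 0"
    hence "l \<in> S" using that unfolding S_def by auto
    hence "l \<le> k" using Max_ge[OF fS] unfolding k_def by auto
    thus False using that by simp
  qed
  show ?thesis
  proof (intro exI conjI allI impI)
    show "k \<le> n" "u $ k \<noteq> 0" using k by auto
    fix r assume r: "r < n"
    have z0: "(Z *\<^sub>v u) $ r = 0" unfolding Zu using r by simp
    have "(Z *\<^sub>v u) $ r = (\<Sum>l\<in>{0..<Suc n}. Z $$ (r,l) * u $ l)" 
      using Z u r by (subst index_mult_mat_vec, auto simp: scalar_prod_def)
    hence "0 = (\<Sum>l\<in>{0..<Suc n}. Z $$ (r,l) * u $ l)" using z0 by simp
    also have "\<dots> = (\<Sum>l\<in>{0..<Suc n}. u $ l * (A ^\<^sub>m l *\<^sub>v x) $ r)"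
      by (rule sum.cong, insert r, auto simp: Z_def)
    also have "\<dots> = (\<Sum>l\<in>{0..k}. u $ l * (A ^\<^sub>m l *\<^sub>v x) $ r)"
      by (rule sum.mono_neutral_right, insert k big, auto)
    finally show "(\<Sum>l\<in>{0..k}. u $ l * (A ^\<^sub>m l *\<^sub>v x) $ r) = 0" by simp
  qed
qed

lemma pow_mat_add: assumes A: "A \<in> carrier_mat n n"
  shows "A ^\<^sub>m (j + l) = A ^\<^sub>m j * A ^\<^sub>m l"
proof (induct l)
  case 0 then show ?case using A by simp
next
  case (Suc l)
  then show ?case using A by (simp add: assoc_mult_mat[of _ n n _ n _ n])
qed

lemma CH_ext:
  fixes A M :: "real mat"
  assumes A: "A \<in> carrier_mat n n" and x: "x \<in> carrier_vec n" and M: "M \<in> carrier_mat q n"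
    and hyp: "\<forall>l\<in>{1..n}. (M * A ^\<^sub>m (l-1)) *\<^sub>v x = 0\<^sub>v q"
  shows "(M * A ^\<^sub>m j) *\<^sub>v x = 0\<^sub>v q"
proof -
  obtain a k where k: "k \<le> n" "a k \<noteq> 0" and dep: "\<forall>r<n. (\<Sum>l\<in>{0..k}. a l * (A ^\<^sub>m l *\<^sub>v x) $ r) = 0"
    using krylov_dep[OF A x] by blast
  have main: "((M * A ^\<^sub>m j) *\<^sub>v x) $ i = 0" if i: "i < q" for i j
  proof -
    define s where "s j = ((M * A ^\<^sub>m j) *\<^sub>v x) $ i" for j
    have rec: "(\<Sum>l\<in>{0..k}. a l * s (j + l)) = 0" for j
    proof -
      define W where "W = M * A ^\<^sub>m j"
      have W: "W \<in> carrier_mat q n" using M A unfolding W_def by auto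
      have sj: "s (j + l) = (\<Sum>r\<in>{0..<n}. W $$ (i,r) * (A ^\<^sub>m l *\<^sub>v x) $ r)" for l
      proof -
        have "M * A ^\<^sub>m (j + l) = W * A ^\<^sub>m l"
          unfolding W_def pow_mat_add[OF A] using M A by (simp add: assoc_mult_mat[of _ q n _ n _ n])
        hence "s (j + l) = (W *\<^sub>v (A ^\<^sub>m l *\<^sub>v x)) $ i"
          unfolding s_def using W A x by (simp add: assoc_mult_mat_vec[of W q n "A ^\<^sub>m l" n x])
        thus ?thesis using W A x i by (simp add: scalar_prod_def)
      qed
      have "(\<Sum>l\<in>{0..k}. a l * s (j + l)) = (\<Sum>l\<in>{0..k}. \<Sum>r\<in>{0..<n}. W $$ (i,r) * (a l * (A ^\<^sub>m l *\<^sub>v x) $ r))"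
        unfolding sj by (simp add: sum_distrib_left ac_simps)
      also have "\<dots> = (\<Sum>r\<in>{0..<n}. W $$ (i,r) * (\<Sum>l\<in>{0..k}. a l * (A ^\<^sub>m l *\<^sub>v x) $ r))"
        by (subst sum.swap, simp add: sum_distrib_left)
      also have "\<dots> = 0" using dep by simp
      finally show ?thesis .
    qed
    have "s j = 0" for j
    proof (induct j rule: less_induct)
      case (less j)
      show ?case
      proof (cases "j < n")
        case True
        have "Suc j \<in> {1..n}" using True by auto
        hence "(M * A ^\<^sub>m j) *\<^sub>v x = 0\<^sub>v q" using hyp by fastforce
        thus ?thesis unfolding s_def using i by simp
      next
        case False
        define j' where "j' = j - k"
        have jj: "j = j' + k" using False k unfolding j'_def by auto
        have "{0..k} = insert k {0..<k}" by auto
        hence "0 = a k * s (j' + k) + (\<Sum>l\<in>{0..<k}. a l * s (j' + l))"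
          using rec[of j'] by simp
        also have "(\<Sum>l\<in>{0..<k}. a l * s (j' + l)) = 0"
          by (rule sum.neutral, insert less jj, auto)
        finally have "a k * s j = 0" using jj by simp
        thus ?thesis using k by simp
      qed
    qed
    thus ?thesis unfolding s_def by simp
  qed
  show ?thesis by (rule eq_vecI, insert main M A x, auto)
qed


lemma dim_col_diag_block: "\<forall>M\<in>set Ms. dim_col M = n \<Longrightarrow> dim_col (diag_block_mat Ms) = length Ms * n"
  by (induct Ms, auto simp: Let_def)

lemma zero_append: "0\<^sub>v a @\<^sub>v 0\<^sub>v b = (0\<^sub>v (a+b) :: 'a::zero vec)"
  by (rule eq_vecI, auto)

lemma diag_block_zero:
  fixes Cs :: "'a::comm_ring_1 mat list"
  assumes "\<forall>M\<in>set Cs. dim_col M = n"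
    and "w \<in> carrier_vec (length Cs * n)"
    and "\<forall>k<length Cs. Cs!k *\<^sub>v vec n (\<lambda>c. w$(k*n+c)) = 0\<^sub>v (dim_row (Cs!k))"
  shows "diag_block_mat Cs *\<^sub>v w = 0\<^sub>v (dim_row (diag_block_mat Cs))"
  using assms
proof (induct Cs arbitrary: w)
  case Nil
  then show ?case by (intro eq_vecI) auto
next
  case (Cons M Ms w)
  define B where "B = diag_block_mat Ms"
  have B: "B \<in> carrier_mat (dim_row B) (length Ms * n)" using dim_col_diag_block[of Ms n] Cons(2)
    unfolding B_def by auto
  have Mc: "M \<in> carrier_mat (dim_row M) n" using Cons(2) by auto
  define w1 where "w1 = vec_first w n"
  define w2 where "w2 = vec_last w (length Ms * n)"
  have w: "w = w1 @\<^sub>v w2" unfolding w1_def w2_def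
    by (rule vec_first_last_append[symmetric], insert Cons(3), auto)
  have w1: "w1 \<in> carrier_vec n" and w2: "w2 \<in> carrier_vec (length Ms * n)" unfolding w1_def w2_def by auto
  have "M *\<^sub>v w1 = 0\<^sub>v (dim_row M)"
  proof -
    have "w1 = vec n (\<lambda>c. w$(0*n+c))" unfolding w1_def vec_first_def by simp
    moreover have "(M#Ms)!0 *\<^sub>v vec n (\<lambda>c. w$(0*n+c)) = 0\<^sub>v (dim_row ((M#Ms)!0))"
      using Cons(4) by blast
    ultimately show ?thesis by simp
  qed
  moreover have "B *\<^sub>v w2 = 0\<^sub>v (dim_row B)"
    unfolding B_def
  proof (rule Cons(1))
    show "\<forall>M\<in>set Ms. dim_col M = n" "w2 \<in> carrier_vec (length Ms * n)" using Cons(2) w2 by auto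
    show "\<forall>k<length Ms. Ms ! k *\<^sub>v vec n (\<lambda>c. w2 $ (k * n + c)) = 0\<^sub>v (dim_row (Ms ! k))"
    proof (intro allI impI)
      fix k assume k: "k < length Ms"
      have "vec n (\<lambda>c. w2 $ (k * n + c)) = vec n (\<lambda>c. w $ (Suc k * n + c))"
      proof (rule eq_vecI)
        fix c assume "c < dim_vec (vec n (\<lambda>c. w $ (Suc k * n + c)))"
        hence c: "c < n" by simp
        have "k * n + c < length Ms * n"
        proof -
          have "k*n+c < (k+1)*n" using c by simp
          also have "(k+1)*n \<le> length Ms * n" using k by (intro mult_le_mono1) simp
          finally show ?thesis .
        qed
        thus "vec n (\<lambda>c. w2 $ (k * n + c)) $ c = vec n (\<lambda>c. w $ (Suc k * n + c)) $ c"
          using c Cons(3) unfolding w2_def vec_last_def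
          by (auto simp del: add.assoc simp add: add.assoc[symmetric])
      qed auto
      moreover have "(M#Ms)!(Suc k) *\<^sub>v vec n (\<lambda>c. w$(Suc k*n+c)) = 0\<^sub>v (dim_row ((M#Ms)!(Suc k)))"
        using Cons(4)[rule_format, of "Suc k"] k by (simp del: mult_Suc)
      ultimately show "Ms ! k *\<^sub>v vec n (\<lambda>c. w2 $ (k * n + c)) = 0\<^sub>v (dim_row (Ms ! k))"
        by simp
    qed
  qed
  ultimately show ?case
  proof -
    assume m1: "M *\<^sub>v w1 = 0\<^sub>v (dim_row M)" and m2: "B *\<^sub>v w2 = 0\<^sub>v (dim_row B)"
    have D: "diag_block_mat (M#Ms) = four_block_mat M (0\<^sub>m (dim_row M) (length Ms * n)) (0\<^sub>m (dim_row B) n) B"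
      proof -
      have c1: "dim_col B = length Ms * n" and c2: "dim_col M = n" using B Mc by auto
      show ?thesis unfolding diag_block_mat.simps Let_def B_def[symmetric] c1 c2 ..
    qed
    have "diag_block_mat (M#Ms) *\<^sub>v w = (M *\<^sub>v w1 + 0\<^sub>m (dim_row M) (length Ms * n) *\<^sub>v w2) @\<^sub>v
        (0\<^sub>m (dim_row B) n *\<^sub>v w1 + B *\<^sub>v w2)"
      unfolding D
      by (subst w, rule four_block_mat_mult_vec[OF Mc _ _ B w1 w2], auto)
    also have "\<dots> = 0\<^sub>v (dim_row M) @\<^sub>v 0\<^sub>v (dim_row B)"
      unfolding m1 m2 using w1 w2 by (intro arg_cong2[where f=append_vec], auto)
    also have "\<dots> = 0\<^sub>v (dim_row (diag_block_mat (M#Ms)))"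
      unfolding zero_append D by simp
    finally show ?thesis .
  qed
qed


lemma mv_index: "A \<in> carrier_mat n k \<Longrightarrow> v \<in> carrier_vec k \<Longrightarrow> i < n \<Longrightarrow>
  (A *\<^sub>v v) $ i = (\<Sum>j\<in>{0..<k}. A $$ (i,j) * v $ j)"
  by (simp add: scalar_prod_def)

lemma vec_zeroI: "v \<in> carrier_vec n \<Longrightarrow> (\<And>i. i < n \<Longrightarrow> v $ i = 0) \<Longrightarrow> v = 0\<^sub>v n"
  by (intro eq_vecI, auto)

lemma lap_index: "a < N \<Longrightarrow> b < N \<Longrightarrow> laplacian N E $$ (a,b) =
   (if a = b then real (in_degree E a) else 0) - (if (b, a) \<in> E then 1 else 0)"
  unfolding laplacian_def by simp

lemma lap_carrier: "laplacian N E \<in> carrier_mat N N"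
  unfolding laplacian_def by simp

lemma graph_kernel:
  assumes E_nodes: "E \<subseteq> {..<N} \<times> {..<N}" and reach: "is_reach N E R"
  shows "\<exists>v \<in> carrier_vec N. v \<noteq> 0\<^sub>v N \<and> laplacian N E *\<^sub>v v = 0\<^sub>v N \<and> (\<forall>k<N. v$k \<noteq> 0 \<longrightarrow> k \<in> R)"
proof -
  obtain r0 where r0: "r0 < N" and Rdef: "R = reachable_set E r0"
    and max: "\<not> (\<exists>j<N. j \<noteq> r0 \<and> reachable_set E r0 \<subset> reachable_set E j)"
    using reach unfolding is_reach_def by blast
  define L where "L = laplacian N E"
  have Lc: "L \<in> carrier_mat N N" unfolding L_def by (rule lap_carrier)
  have RN: "k < N" if "k \<in> R" for k
  proof -
    have "(r0, k) \<in> E\<^sup>*" using that unfolding Rdef reachable_set_def by simp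
    thus ?thesis by (induct rule: rtrancl_induct, insert r0 E_nodes, auto)
  qed
  have P1: "j \<in> R" if "k \<in> R" "(k,j) \<in> E" for k j
    using that unfolding Rdef reachable_set_def by (auto intro: rtrancl_into_rtrancl)
  have r0R: "r0 \<in> R" unfolding Rdef reachable_set_def by simp
  define S where "S = {k\<in>R. (k, r0) \<in> E\<^sup>*}"
  have SR: "S \<subseteq> R" unfolding S_def by auto
  have r0S: "r0 \<in> S" unfolding S_def using r0R by simp
  have P2: "j \<in> S" if "k \<in> S" "(j,k) \<in> E" for k j
  proof -
    have jr: "(j, r0) \<in> E\<^sup>*" using that unfolding S_def by (auto intro: converse_rtrancl_into_rtrancl)
    have jN: "j < N" using that E_nodes by auto
    have "j \<in> R"
    proof (rule ccontr)
      assume jR: "j \<notin> R"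
      have "reachable_set E r0 \<subseteq> reachable_set E j"
        using jr unfolding reachable_set_def by (auto intro: rtrancl_trans)
      moreover have "j \<in> reachable_set E j" unfolding reachable_set_def by simp
      ultimately have "reachable_set E r0 \<subset> reachable_set E j" using jR Rdef by auto
      moreover have "j \<noteq> r0" using jR r0R by auto
      ultimately show False using max jN by blast
    qed
    thus ?thesis using jr unfolding S_def by simp
  qed
  have Lab: "L $$ (a,b) = (if a = b then real (in_degree E a) else 0) - (if (b, a) \<in> E then 1 else 0)"
    if "a < N" "b < N" for a b unfolding L_def using lap_index that by blast
  have rowsum: "(\<Sum>b\<in>{0..<N}. if b \<in> S then L $$ (a,b) else 0) = 0" if aS: "a \<in> S" for a
  proof -
    have aN: "a < N" using aS SR RN by auto
    have "(\<Sum>b\<in>{0..<N}. if b \<in> S then L $$ (a,b) else 0) =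
       (\<Sum>b\<in>{0..<N}. (if b = a then real (in_degree E a) else 0) - (if b \<in> {j. (j,a) \<in> E} then 1 else 0))"
    proof (rule sum.cong)
      fix b assume "b \<in> {0..<N}"
      hence bN: "b < N" by simp
      show "(if b \<in> S then L $$ (a,b) else 0) =
        (if b = a then real (in_degree E a) else 0) - (if b \<in> {j. (j,a) \<in> E} then 1 else 0)"
        using Lab[OF aN bN] P2[OF aS, of b] aS by auto
    qed simp
    also have "\<dots> = real (in_degree E a) - (\<Sum>b\<in>{0..<N}. if b \<in> {j. (j,a) \<in> E} then 1 else 0)"
      using aN by (simp add: sum_subtractf)
    also have "(\<Sum>b\<in>{0..<N}. if b \<in> {j. (j,a) \<in> E} then 1 else (0::real)) = real (card ({0..<N} \<inter> {j. (j,a) \<in> E}))"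
      by (simp add: sum.If_cases)
    also have "{0..<N} \<inter> {j. (j,a) \<in> E} = {j. (j,a) \<in> E}" using E_nodes by auto
    finally show ?thesis unfolding in_degree_def by simp
  qed
  define M' where "M' = mat N N (\<lambda>(a,b). if a \<in> S \<and> b \<in> S then L $$ (a,b) else if a = b then 1 else (0::real))"
  have M'c: "M' \<in> carrier_mat N N" unfolding M'_def by simp
  define oneS where "oneS = vec N (\<lambda>k. if k \<in> S then 1 else (0::real))"
  have oc: "oneS \<in> carrier_vec N" unfolding oneS_def by simp
  have o0: "oneS \<noteq> 0\<^sub>v N"
  proof
    assume "oneS = 0\<^sub>v N"
    hence "oneS $ r0 = 0" using r0 by simp
    thus False using r0 r0S unfolding oneS_def by simp
  qed
  have "M' *\<^sub>v oneS = 0\<^sub>v N"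
  proof (rule vec_zeroI)
    show "M' *\<^sub>v oneS \<in> carrier_vec N" using M'c oc by simp
    fix a assume aN: "a < N"
    have "(M' *\<^sub>v oneS) $ a = (\<Sum>b\<in>{0..<N}. M' $$ (a,b) * oneS $ b)" by (rule mv_index[OF M'c oc aN])
    also have "\<dots> = (\<Sum>b\<in>{0..<N}. if a \<in> S then (if b \<in> S then L $$ (a,b) else 0) else 0)"
      by (rule sum.cong, insert aN, auto simp: M'_def oneS_def)
    also have "\<dots> = 0" using rowsum[of a] by (cases "a \<in> S", auto)
    finally show "(M' *\<^sub>v oneS) $ a = 0" .
  qed
  then obtain w where wc: "w \<in> carrier_vec N" and w0: "w \<noteq> 0\<^sub>v N" and wk: "transpose_mat M' *\<^sub>v w = 0\<^sub>v N"
    using kernel_transpose[OF M'c oc o0] by blast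
  have M'tc: "transpose_mat M' \<in> carrier_mat N N" using M'c by simp
  have wt: "(\<Sum>a\<in>{0..<N}. M' $$ (a,b) * w $ a) = 0" if bN: "b < N" for b
  proof -
    have "(transpose_mat M' *\<^sub>v w) $ b = 0" using wk bN by simp
    thus ?thesis unfolding mv_index[OF M'tc wc bN] using M'c bN by simp
  qed
  have wS: "w $ b = 0" if bN: "b < N" and bS: "b \<notin> S" for b
  proof -
    have "(\<Sum>a\<in>{0..<N}. M' $$ (a,b) * w $ a) = (\<Sum>a\<in>{0..<N}. if a = b then w $ a else 0)"
      by (rule sum.cong, insert bN bS, auto simp: M'_def)
    thus ?thesis using wt[OF bN] bN by simp
  qed
  have wS2: "(\<Sum>a\<in>{0..<N}. (if a \<in> S then L $$ (a,b) else 0) * w $ a) = 0" if bN: "b < N" and bS: "b \<in> S" for b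
  proof -
    have "(\<Sum>a\<in>{0..<N}. M' $$ (a,b) * w $ a) = (\<Sum>a\<in>{0..<N}. (if a \<in> S then L $$ (a,b) else 0) * w $ a)"
      by (rule sum.cong, insert bN bS, auto simp: M'_def)
    thus ?thesis using wt[OF bN] by simp
  qed
  define M where "M = mat N N (\<lambda>(a,b). if a \<in> R \<and> b \<in> R then L $$ (a,b) else if a = b then 1 else (0::real))"
  have Mc: "M \<in> carrier_mat N N" unfolding M_def by simp
  have Mtc: "transpose_mat M \<in> carrier_mat N N" using Mc by simp
  have "transpose_mat M *\<^sub>v w = 0\<^sub>v N"
  proof (rule vec_zeroI)
    show "transpose_mat M *\<^sub>v w \<in> carrier_vec N" using Mtc wc by simp
    fix b assume bN: "b < N"
    have "(transpose_mat M *\<^sub>v w) $ b = (\<Sum>a\<in>{0..<N}. M $$ (a,b) * w $ a)"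
      unfolding mv_index[OF Mtc wc bN] using Mc bN by simp
    also have "\<dots> = (\<Sum>a\<in>{0..<N}. (if b \<in> S then (if a \<in> S then L $$ (a,b) else 0) * w $ a else 0))"
    proof (rule sum.cong)
      fix a assume "a \<in> {0..<N}"
      hence aN: "a < N" by simp
      show "M $$ (a,b) * w $ a = (if b \<in> S then (if a \<in> S then L $$ (a,b) else 0) * w $ a else 0)"
      proof (cases "a \<in> S")
        case False then show ?thesis using wS[OF aN] by simp
      next
        case aS: True
        hence aR: "a \<in> R" using SR by auto
        show ?thesis
        proof (cases "b \<in> S")
          case True then show ?thesis using aS SR aN bN by (auto simp: M_def)
        next
          case bS: False
          have ab: "a \<noteq> b" using aS bS by auto
          have "(b, a) \<notin> E" using P2[OF aS] bS by auto
          thus ?thesis using ab bS aR aN bN Lab[OF aN bN] by (auto simp: M_def)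
        qed
      qed
    qed simp
    also have "\<dots> = 0" using wS2[OF bN] by (cases "b \<in> S", auto)
    finally show "(transpose_mat M *\<^sub>v w) $ b = 0" .
  qed
  then obtain v where vc: "v \<in> carrier_vec N" and v0: "v \<noteq> 0\<^sub>v N" and vk: "transpose_mat (transpose_mat M) *\<^sub>v v = 0\<^sub>v N"
    using kernel_transpose[OF Mtc wc w0] by blast
  have Mv: "M *\<^sub>v v = 0\<^sub>v N" using vk by simp
  have Mva: "(\<Sum>b\<in>{0..<N}. M $$ (a,b) * v $ b) = 0" if aN: "a < N" for a
  proof -
    have "(M *\<^sub>v v) $ a = 0" using Mv aN by simp
    thus ?thesis unfolding mv_index[OF Mc vc aN] .
  qed
  have vR: "v $ a = 0" if aN: "a < N" and aR: "a \<notin> R" for a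
  proof -
    have "(\<Sum>b\<in>{0..<N}. M $$ (a,b) * v $ b) = (\<Sum>b\<in>{0..<N}. if b = a then v $ b else 0)"
      by (rule sum.cong, insert aN aR, auto simp: M_def)
    thus ?thesis using Mva[OF aN] aN by simp
  qed
  have "L *\<^sub>v v = 0\<^sub>v N"
  proof (rule vec_zeroI)
    show "L *\<^sub>v v \<in> carrier_vec N" using Lc vc by simp
    fix a assume aN: "a < N"
    have "(L *\<^sub>v v) $ a = (\<Sum>b\<in>{0..<N}. L $$ (a,b) * v $ b)" by (rule mv_index[OF Lc vc aN])
    also have "\<dots> = (\<Sum>b\<in>{0..<N}. if a \<in> R then M $$ (a,b) * v $ b else 0)"
    proof (rule sum.cong)
      fix b assume "b \<in> {0..<N}"
      hence bN: "b < N" by simp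
      show "L $$ (a,b) * v $ b = (if a \<in> R then M $$ (a,b) * v $ b else 0)"
      proof (cases "b \<in> R")
        case False then show ?thesis using vR[OF bN] by simp
      next
        case bR: True
        show ?thesis
        proof (cases "a \<in> R")
          case True then show ?thesis using bR aN bN by (simp add: M_def)
        next
          case aR: False
          have ab: "a \<noteq> b" using aR bR by auto
          have "(b, a) \<notin> E" using P1[OF bR] aR by auto
          thus ?thesis using ab aR Lab[OF aN bN] by simp
        qed
      qed
    qed simp
    also have "\<dots> = 0" using Mva[OF aN] by (cases "a \<in> R", auto)
    finally show "(L *\<^sub>v v) $ a = 0" .
  qed
  moreover have "\<forall>k<N. v$k \<noteq> 0 \<longrightarrow> k \<in> R" using vR by blast
  ultimately show ?thesis using vc v0 unfolding L_def by blast
qed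


lemma kv_zero: "v \<in> carrier_vec N \<Longrightarrow> kv v (0\<^sub>v n) = (0\<^sub>v (N*n) :: 'a::semiring_0 vec)"
  by (rule eq_vecI, auto simp: kv_def mod_lt)

lemma pow_kv:
  fixes A :: "'a::comm_semiring_1 mat"
  assumes A: "A \<in> carrier_mat n n" and v: "v \<in> carrier_vec N"
  shows "x \<in> carrier_vec n \<Longrightarrow> kron_mat (1\<^sub>m N) A ^\<^sub>m j *\<^sub>v kv v x = kv v (A ^\<^sub>m j *\<^sub>v x)"
proof (induct j arbitrary: x)
  case 0 then show ?case using A v by simp
next
  case (Suc j)
  have Ab: "kron_mat (1\<^sub>m N) A \<in> carrier_mat (N*n) (N*n)" using A by simp
  have "kron_mat (1\<^sub>m N) A ^\<^sub>m Suc j *\<^sub>v kv v x = kron_mat (1\<^sub>m N) A ^\<^sub>m j *\<^sub>v (kron_mat (1\<^sub>m N) A *\<^sub>v kv v x)"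
    using assoc_mult_mat_vec[OF pow_carrier_mat[OF Ab] Ab kv_carrier[OF v Suc(2)]] by simp
  also have "kron_mat (1\<^sub>m N) A *\<^sub>v kv v x = kv v (A *\<^sub>v x)"
    using kron_mult_vec[of "1\<^sub>m N" N N A n n v x] A v Suc(2) by simp
  also have "kron_mat (1\<^sub>m N) A ^\<^sub>m j *\<^sub>v kv v (A *\<^sub>v x) = kv v (A ^\<^sub>m j *\<^sub>v (A *\<^sub>v x))"
    by (rule Suc(1), insert A Suc(2), simp)
  also have "A ^\<^sub>m j *\<^sub>v (A *\<^sub>v x) = A ^\<^sub>m Suc j *\<^sub>v x"
    using assoc_mult_mat_vec[OF pow_carrier_mat[OF A] A Suc(2), of j] by simp
  finally show ?case .
qed

lemma block_kv: "v \<in> carrier_vec N \<Longrightarrow> y \<in> carrier_vec n \<Longrightarrow> k < N \<Longrightarrow>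
   vec n (\<lambda>c. kv v y $ (k*n+c)) = v $ k \<cdot>\<^sub>v y"
proof (rule eq_vecI)
  fix c assume v: "v \<in> carrier_vec N" and y: "y \<in> carrier_vec n" and k: "k < N"
    and "c < dim_vec (v $ k \<cdot>\<^sub>v y)"
  hence c: "c < n" by simp
  have "k*n+c < (k+1)*n" using c by simp
  also have "(k+1)*n \<le> N*n" using k by (intro mult_le_mono1) simp
  finally have lt: "k*n+c < N*n" .
  show "vec n (\<lambda>c. kv v y $ (k*n+c)) $ c = (v $ k \<cdot>\<^sub>v y) $ c"
    using index_kv[OF v y lt] c y by simp
qed auto

lemma main_witness:
  fixes A H :: "real mat" and C :: "nat \<Rightarrow> real mat"
  assumes A: "A \<in> carrier_mat n n"
    and C: "\<forall>i<N. C i \<in> carrier_mat (m i) n"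
    and H: "H \<in> carrier_mat p n"
    and v: "v \<in> carrier_vec N" "v \<noteq> 0\<^sub>v N"
    and x: "x \<in> carrier_vec n" "x \<noteq> 0\<^sub>v n"
    and Cz: "\<forall>k<N. v$k \<noteq> 0 \<longrightarrow> (\<forall>j. (C k * A ^\<^sub>m j) *\<^sub>v x = 0\<^sub>v (m k))"
    and Kz: "\<forall>j. kron_mat (laplacian N E) H *\<^sub>v kv v (A ^\<^sub>m j *\<^sub>v x) = 0\<^sub>v (N*p)"
    and Pz: "mat_poly_eval (alpha_plus A) (map_mat complex_of_real A) *\<^sub>v map_vec complex_of_real x = 0\<^sub>v n"
  shows "kv v x \<in> undetectable_subspace
               (diag_block_mat (map C [0..<N]) @\<^sub>r kron_mat (laplacian N E) H)
               (kron_mat (1\<^sub>m N) A) \<and> kv v x \<noteq> 0\<^sub>v (N*n)"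
proof -
  define D where "D = diag_block_mat (map C [0..<N])"
  define K where "K = kron_mat (laplacian N E) H"
  define Ab where "Ab = kron_mat (1\<^sub>m N) A"
  define X where "X = kv v x"
  have Abc: "Ab \<in> carrier_mat (N*n) (N*n)" unfolding Ab_def using A by simp
  have Kc: "K \<in> carrier_mat (N*p) (N*n)" unfolding K_def using H lap_carrier by simp
  have Dcol: "dim_col D = N*n" unfolding D_def using C
    by (subst dim_col_diag_block[of _ n], auto)
  have Dc: "D \<in> carrier_mat (dim_row D) (N*n)" using Dcol by auto
  have Xc: "X \<in> carrier_vec (N*n)" unfolding X_def using v x by simp
  have "\<exists>k<N. v $ k \<noteq> 0"
  proof (rule ccontr)
    assume "\<not> (\<exists>k<N. v $ k \<noteq> 0)"
    hence "v = 0\<^sub>v N" using v(1) by (intro vec_zeroI) auto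
    thus False using v(2) by simp
  qed
  then obtain k where k: "k < N" "v $ k \<noteq> 0" by blast
  have "\<exists>c<n. x $ c \<noteq> 0"
  proof (rule ccontr)
    assume "\<not> (\<exists>c<n. x $ c \<noteq> 0)"
    hence "x = 0\<^sub>v n" using x(1) by (intro vec_zeroI) auto
    thus False using x(2) by simp
  qed
  then obtain c where c: "c < n" "x $ c \<noteq> 0" by blast
  have N0: "N > 0" using k by simp
  have lt: "k*n+c < N*n"
  proof -
    have "k*n+c < (k+1)*n" using c by simp
    also have "(k+1)*n \<le> N*n" using k by (intro mult_le_mono1) simp
    finally show ?thesis .
  qed
  have X0: "X \<noteq> 0\<^sub>v (N*n)"
  proof
    assume "X = 0\<^sub>v (N*n)"
    hence "X $ (k*n+c) = 0" using lt by simp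
    moreover have "X $ (k*n+c) = v $ k * x $ c"
      unfolding X_def using index_kv[OF v(1) x(1) lt] lt c k by simp
    ultimately show False using k c by simp
  qed
  have obs: "((D @\<^sub>r K) * Ab ^\<^sub>m j) *\<^sub>v X = 0\<^sub>v (dim_row (D @\<^sub>r K))" for j
  proof -
    define y where "y = A ^\<^sub>m j *\<^sub>v x"
    have yc: "y \<in> carrier_vec n" unfolding y_def using mult_mat_vec_carrier[OF pow_carrier_mat[OF A] x(1)] .
    define Y where "Y = kv v y"
    have Yc: "Y \<in> carrier_vec (N*n)" unfolding Y_def using v yc by simp
    have GY: "((D @\<^sub>r K) * Ab ^\<^sub>m j) *\<^sub>v X = (D @\<^sub>r K) *\<^sub>v Y"
    proof -
      have "((D @\<^sub>r K) * Ab ^\<^sub>m j) *\<^sub>v X = (D @\<^sub>r K) *\<^sub>v (Ab ^\<^sub>m j *\<^sub>v X)"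
        by (rule assoc_mult_mat_vec[OF carrier_append_rows[OF Dc Kc] pow_carrier_mat[OF Abc] Xc])
      also have "Ab ^\<^sub>m j *\<^sub>v X = Y" unfolding Ab_def X_def Y_def y_def
        by (rule pow_kv[OF A v(1) x(1)])
      finally show ?thesis .
    qed
    have DY: "D *\<^sub>v Y = 0\<^sub>v (dim_row D)"
      unfolding D_def
    proof (rule diag_block_zero)
      show "\<forall>M\<in>set (map C [0..<N]). dim_col M = n" using C by auto
      show "Y \<in> carrier_vec (length (map C [0..<N]) * n)" using Yc by simp
      show "\<forall>i<length (map C [0..<N]). map C [0..<N] ! i *\<^sub>v vec n (\<lambda>c. Y $ (i * n + c)) = 0\<^sub>v (dim_row (map C [0..<N] ! i))"
      proof (intro allI impI)
        fix i assume "i < length (map C [0..<N])"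
        hence i: "i < N" by simp
        have Ci: "C i \<in> carrier_mat (m i) n" using C i by simp
        have "C i *\<^sub>v vec n (\<lambda>c. Y $ (i * n + c)) = C i *\<^sub>v (v $ i \<cdot>\<^sub>v y)"
          unfolding Y_def using block_kv[OF v(1) yc i] by simp
        also have "\<dots> = v $ i \<cdot>\<^sub>v (C i *\<^sub>v y)" by (rule mult_mat_vec[OF Ci yc])
        also have "\<dots> = 0\<^sub>v (m i)"
        proof (cases "v $ i = 0")
          case True then show ?thesis using Ci yc by (intro eq_vecI, auto)
        next
          case False
          hence "(C i * A ^\<^sub>m j) *\<^sub>v x = 0\<^sub>v (m i)" using Cz i by blast
          hence "C i *\<^sub>v y = 0\<^sub>v (m i)" unfolding y_def using assoc_mult_mat_vec[OF Ci pow_carrier_mat[OF A] x(1)] by simp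
          then show ?thesis by (intro eq_vecI) auto
        qed
        finally show "map C [0..<N] ! i *\<^sub>v vec n (\<lambda>c. Y $ (i * n + c)) = 0\<^sub>v (dim_row (map C [0..<N] ! i))"
          using i Ci by simp
      qed
    qed
    have KY: "K *\<^sub>v Y = 0\<^sub>v (N*p)" unfolding K_def Y_def y_def using Kz by blast
    have "(D @\<^sub>r K) *\<^sub>v Y = (D *\<^sub>v Y) @\<^sub>v (K *\<^sub>v Y)" by (rule mat_mult_append[OF Dc Kc Yc])
    also have "\<dots> = 0\<^sub>v (dim_row D + N*p)" unfolding DY KY zero_append ..
    also have "dim_row D + N*p = dim_row (D @\<^sub>r K)" using Kc by (simp add: append_rows_def)
    finally show ?thesis unfolding GY .
  qed
  have poly: "mat_poly_eval (alpha_plus Ab) (map_mat complex_of_real Ab) *\<^sub>v map_vec complex_of_real X = 0\<^sub>v (dim_row Ab)"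
  proof -
    define P where "P = mat_poly_eval (alpha_plus A) (map_mat complex_of_real A)"
    have Pc: "P \<in> carrier_mat n n" unfolding P_def using A by (intro mpe_carrier, simp)
    have "map_mat complex_of_real Ab = kron_mat (1\<^sub>m N) (map_mat complex_of_real A)"
      unfolding Ab_def map_kron map_one ..
    hence "mat_poly_eval (alpha_plus Ab) (map_mat complex_of_real Ab) = kron_mat (1\<^sub>m N) P"
      unfolding P_def alpha_plus_kron[OF A N0, folded Ab_def] using A by (simp add: mpe_kron[of _ n])
    moreover have "map_vec complex_of_real X = kv (map_vec complex_of_real v) (map_vec complex_of_real x)"
      unfolding X_def map_kv ..
    moreover have "kron_mat (1\<^sub>m N) P *\<^sub>v kv (map_vec complex_of_real v) (map_vec complex_of_real x)
       = kv (1\<^sub>m N *\<^sub>v map_vec complex_of_real v) (P *\<^sub>v map_vec complex_of_real x)"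
      by (rule kron_mult_vec, insert Pc v x, auto)
    moreover have "P *\<^sub>v map_vec complex_of_real x = 0\<^sub>v n" using Pz unfolding P_def .
    moreover have "1\<^sub>m N *\<^sub>v map_vec complex_of_real v = map_vec complex_of_real v" using v by simp
    ultimately show ?thesis using kv_zero[of "map_vec complex_of_real v" N n] v Abc by simp
  qed
  show ?thesis
    unfolding undetectable_subspace_def D_def[symmetric] K_def[symmetric] Ab_def[symmetric] X_def[symmetric]
    using Xc Abc obs poly X0 by auto
qed


lemma kv_zero_left: "x \<in> carrier_vec n \<Longrightarrow> kv (0\<^sub>v N) x = (0\<^sub>v (N*n) :: 'a::semiring_0 vec)"
  by (rule eq_vecI, auto simp: kv_def div_lt)

lemma mult_zero_right: "B \<in> carrier_mat r k \<Longrightarrow> B *\<^sub>v 0\<^sub>v k = (0\<^sub>v r :: 'a::comm_ring_1 vec)"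
  by (rule eq_vecI) (auto simp: scalar_prod_def)

lemma zero_in_undet:
  fixes A M :: "real mat"
  assumes A: "A \<in> carrier_mat n n" and M: "dim_col M = n"
  shows "0\<^sub>v n \<in> undetectable_subspace M A"
proof -
  have P: "mat_poly_eval (alpha_plus A) (map_mat complex_of_real A) \<in> carrier_mat n n"
    by (rule mpe_carrier, insert A, simp)
  have mz: "map_vec complex_of_real (0\<^sub>v n) = 0\<^sub>v n" by (rule eq_vecI, auto)
  have "(M * A ^\<^sub>m j) *\<^sub>v 0\<^sub>v n = 0\<^sub>v (dim_row M)" for j
    by (rule mult_zero_right, insert A M, auto)
  moreover have "mat_poly_eval (alpha_plus A) (map_mat complex_of_real A) *\<^sub>v map_vec complex_of_real (0\<^sub>v n) = 0\<^sub>v n"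
    unfolding mz by (rule mult_zero_right[OF P])
  ultimately show ?thesis unfolding undetectable_subspace_def using A by auto
qed

theorem theorem3:
  fixes N n p :: nat and m :: "nat \<Rightarrow> nat"
    and A H :: "real mat" and C :: "nat \<Rightarrow> real mat"
    and E :: "(nat \<times> nat) set" and R :: "nat set"
  assumes A: "A \<in> carrier_mat n n"
    and C: "\<forall>i<N. C i \<in> carrier_mat (m i) n"
    and H: "H \<in> carrier_mat p n"
    and E_nodes: "E \<subseteq> {..<N} \<times> {..<N}"
    and no_loops: "\<forall>i. (i, i) \<notin> E"
    and det: "detectable
               (diag_block_mat (map C [0..<N]) @\<^sub>r kron_mat (laplacian N E) H)
               (kron_mat (1\<^sub>m N) A)"
    and reach: "is_reach N E R"
  shows "(\<Inter>i\<in>R. undetectable_subspace (C i) A) = {0\<^sub>v n} \<and>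
         (\<forall>i\<in>R. unobs_subspace H A \<inter> undetectable_subspace (C i) A = {0\<^sub>v n})"
proof -
  obtain r0 where r0: "r0 < N" and Rdef: "R = reachable_set E r0"
    using reach unfolding is_reach_def by blast
  have RN: "k < N" if "k \<in> R" for k
  proof -
    have "(r0, k) \<in> E\<^sup>*" using that unfolding Rdef reachable_set_def by simp
    thus ?thesis by (induct rule: rtrancl_induct, insert r0 E_nodes, auto)
  qed
  have r0R: "r0 \<in> R" unfolding Rdef reachable_set_def by simp
  define G where "G = diag_block_mat (map C [0..<N]) @\<^sub>r kron_mat (laplacian N E) H"
  have Ud: "undetectable_subspace G (kron_mat (1\<^sub>m N) A) = {0\<^sub>v (N*n)}"
    using det unfolding G_def detectable_def using A by simp
  have Kc: "kron_mat (laplacian N E) H \<in> carrier_mat (N*p) (N*n)" using H lap_carrier by simp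
  have undetD: "x \<in> carrier_vec n \<and> (\<forall>j. (C k * A ^\<^sub>m j) *\<^sub>v x = 0\<^sub>v (m k)) \<and>
     mat_poly_eval (alpha_plus A) (map_mat complex_of_real A) *\<^sub>v map_vec complex_of_real x = 0\<^sub>v n"
    if "x \<in> undetectable_subspace (C k) A" "k < N" for x k
  proof -
    have Ck: "C k \<in> carrier_mat (m k) n" using C that(2) by simp
    have x: "x \<in> carrier_vec n" using that(1) A unfolding undetectable_subspace_def by simp
    have h: "\<forall>l\<in>{1..n}. (C k * A ^\<^sub>m (l-1)) *\<^sub>v x = 0\<^sub>v (m k)"
      using that(1) A Ck unfolding undetectable_subspace_def by simp
    show ?thesis using CH_ext[OF A x Ck h] x that(1) A unfolding undetectable_subspace_def by simp
  qed
  have contra: False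
    if v: "v \<in> carrier_vec N" "v \<noteq> 0\<^sub>v N" and x: "x \<in> carrier_vec n" "x \<noteq> 0\<^sub>v n"
    and Cz: "\<forall>k<N. v$k \<noteq> 0 \<longrightarrow> (\<forall>j. (C k * A ^\<^sub>m j) *\<^sub>v x = 0\<^sub>v (m k))"
    and Kz: "\<forall>j. kron_mat (laplacian N E) H *\<^sub>v kv v (A ^\<^sub>m j *\<^sub>v x) = 0\<^sub>v (N*p)"
    and Pz: "mat_poly_eval (alpha_plus A) (map_mat complex_of_real A) *\<^sub>v map_vec complex_of_real x = 0\<^sub>v n"
    for v x
  proof -
    have "kv v x \<in> undetectable_subspace G (kron_mat (1\<^sub>m N) A) \<and> kv v x \<noteq> 0\<^sub>v (N*n)"
      unfolding G_def by (rule main_witness[OF A C H v x Cz Kz Pz])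
    thus False using Ud by auto
  qed
  have part1: "(\<Inter>i\<in>R. undetectable_subspace (C i) A) = {0\<^sub>v n}"
  proof
    show "{0\<^sub>v n} \<subseteq> (\<Inter>i\<in>R. undetectable_subspace (C i) A)"
      using zero_in_undet[OF A] RN C by fastforce
    show "(\<Inter>i\<in>R. undetectable_subspace (C i) A) \<subseteq> {0\<^sub>v n}"
    proof
      fix x assume xI: "x \<in> (\<Inter>i\<in>R. undetectable_subspace (C i) A)"
      have xc: "x \<in> carrier_vec n" using undetD[of x r0] xI r0R r0 by auto
      show "x \<in> {0\<^sub>v n}"
      proof (rule ccontr)
        assume "x \<notin> {0\<^sub>v n}"
        hence x0: "x \<noteq> 0\<^sub>v n" by simp
        obtain v where v: "v \<in> carrier_vec N" "v \<noteq> 0\<^sub>v N" and Lv: "laplacian N E *\<^sub>v v = 0\<^sub>v N"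
          and vR: "\<forall>k<N. v$k \<noteq> 0 \<longrightarrow> k \<in> R"
          using graph_kernel[OF E_nodes reach] by blast
        show False
        proof (rule contra[OF v xc x0])
          show "\<forall>k<N. v$k \<noteq> 0 \<longrightarrow> (\<forall>j. (C k * A ^\<^sub>m j) *\<^sub>v x = 0\<^sub>v (m k))"
            using undetD xI vR by blast
          show "\<forall>j. kron_mat (laplacian N E) H *\<^sub>v kv v (A ^\<^sub>m j *\<^sub>v x) = 0\<^sub>v (N*p)"
          proof
            fix j
            have y: "A ^\<^sub>m j *\<^sub>v x \<in> carrier_vec n" using mult_mat_vec_carrier[OF pow_carrier_mat[OF A] xc] .
            have "kron_mat (laplacian N E) H *\<^sub>v kv v (A ^\<^sub>m j *\<^sub>v x) = kv (laplacian N E *\<^sub>v v) (H *\<^sub>v (A ^\<^sub>m j *\<^sub>v x))"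
              by (rule kron_mult_vec[OF lap_carrier H v(1) y])
            also have "\<dots> = 0\<^sub>v (N*p)" unfolding Lv
              by (rule kv_zero_left, insert H y, simp)
            finally show "kron_mat (laplacian N E) H *\<^sub>v kv v (A ^\<^sub>m j *\<^sub>v x) = 0\<^sub>v (N*p)" .
          qed
          show "mat_poly_eval (alpha_plus A) (map_mat complex_of_real A) *\<^sub>v map_vec complex_of_real x = 0\<^sub>v n"
            using undetD[of x r0] xI r0R r0 by auto
        qed
      qed
    qed
  qed
  have part2: "unobs_subspace H A \<inter> undetectable_subspace (C i) A = {0\<^sub>v n}" if iR: "i \<in> R" for i
  proof
    have iN: "i < N" using RN iR by simp
    show "{0\<^sub>v n} \<subseteq> unobs_subspace H A \<inter> undetectable_subspace (C i) A"
      using zero_in_undet[OF A, of "C i"] C iN A mult_zero_right[of "H * A ^\<^sub>m _" p n]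
      H unfolding unobs_subspace_def by auto
    show "unobs_subspace H A \<inter> undetectable_subspace (C i) A \<subseteq> {0\<^sub>v n}"
    proof
      fix x assume xI: "x \<in> unobs_subspace H A \<inter> undetectable_subspace (C i) A"
      have ud: "x \<in> carrier_vec n \<and> (\<forall>j. (C i * A ^\<^sub>m j) *\<^sub>v x = 0\<^sub>v (m i)) \<and>
        mat_poly_eval (alpha_plus A) (map_mat complex_of_real A) *\<^sub>v map_vec complex_of_real x = 0\<^sub>v n"
        using undetD[of x i] xI iN by auto
      hence xc: "x \<in> carrier_vec n" by simp
      have hH: "\<forall>l\<in>{1..n}. (H * A ^\<^sub>m (l-1)) *\<^sub>v x = 0\<^sub>v p"
        using xI A H unfolding unobs_subspace_def by simp
      show "x \<in> {0\<^sub>v n}"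
      proof (rule ccontr)
        assume "x \<notin> {0\<^sub>v n}"
        hence x0: "x \<noteq> 0\<^sub>v n" by simp
        define v :: "real vec" where "v = unit_vec N i"
        have v: "v \<in> carrier_vec N" "v \<noteq> 0\<^sub>v N" unfolding v_def using iN by auto
        show False
        proof (rule contra[OF v xc x0])
          show "\<forall>k<N. v$k \<noteq> 0 \<longrightarrow> (\<forall>j. (C k * A ^\<^sub>m j) *\<^sub>v x = 0\<^sub>v (m k))"
            using ud iN unfolding v_def by auto
          show "\<forall>j. kron_mat (laplacian N E) H *\<^sub>v kv v (A ^\<^sub>m j *\<^sub>v x) = 0\<^sub>v (N*p)"
          proof
            fix j
            have y: "A ^\<^sub>m j *\<^sub>v x \<in> carrier_vec n" using mult_mat_vec_carrier[OF pow_carrier_mat[OF A] xc] .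
            have Hy: "H *\<^sub>v (A ^\<^sub>m j *\<^sub>v x) = 0\<^sub>v p"
              using CH_ext[OF A xc H hH, of j] assoc_mult_mat_vec[OF H pow_carrier_mat[OF A] xc] by simp
            have "kron_mat (laplacian N E) H *\<^sub>v kv v (A ^\<^sub>m j *\<^sub>v x) = kv (laplacian N E *\<^sub>v v) (H *\<^sub>v (A ^\<^sub>m j *\<^sub>v x))"
              by (rule kron_mult_vec[OF lap_carrier H v(1) y])
            also have "\<dots> = 0\<^sub>v (N*p)" unfolding Hy
              by (rule kv_zero[OF mult_mat_vec_carrier[OF lap_carrier v(1)]])
            finally show "kron_mat (laplacian N E) H *\<^sub>v kv v (A ^\<^sub>m j *\<^sub>v x) = 0\<^sub>v (N*p)" .
          qed
          show "mat_poly_eval (alpha_plus A) (map_mat complex_of_real A) *\<^sub>v map_vec complex_of_real x = 0\<^sub>v n"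
            using ud by simp
        qed
      qed
    qed
  qed
  show ?thesis using part1 part2 by blast
qed

end
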